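(* Let $(X,\|\cdot\|)$ be a normed linear space over $\mathbb{R}$ or $\mathbb{C}$. Then for all $x,a\in X$, $$\langle x,a\rangle_i\ \ge\ \|a\|\left(\|a\|-\|x-a\|\right).$$ The inequality is sharp: for every $a\in X\setminus\{0\}$ and every $\varepsilon\in(0,1)$, equality holds for $x=\varepsilon a$, both sides being equal to the nonzero number $\varepsilon\|a\|^2$.
   Context: For a normed linear space $(X,\|\cdot\|)$, the inferior semi-inner product is defined for $x,y\in X$ by $\langle x,y\rangle_i:=\lim_{t\to 0^-}\frac{\|y+tx\|^2-\|y\|^2}{2t}$. *)

theory Defs
  imports "HOL-Analysis.Analysis"
begin

text \<open>Inferior semi-inner product: the left-hand limit at 0 of
  (norm (y + t x)^2 - norm y^2) / (2 t).  Real scalars t are used; complex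
  normed spaces are real normed vector spaces as well.\<close>
definition sip_i :: "'a::real_normed_vector \<Rightarrow> 'a \<Rightarrow> real" where
  "sip_i x y = Lim (at_left 0)
     (\<lambda>t::real. ((norm (y + t *\<^sub>R x))\<^sup>2 - (norm y)\<^sup>2) / (2 * t))"

end

theory Submission
  imports Defs
begin

lemma part1:
  fixes x a :: "'a::real_normed_vector"
  shows "sip_i x a \<ge> norm a * (norm a - norm (x - a))"
proof -
  define A where "A = norm a"
  define B where "B = norm (x - a)"
  define h where "h = (\<lambda>t::real. norm (a + t *\<^sub>R x))"
  define q where "q = (\<lambda>t::real. (h t - A) / t)"
  define Q where "Q = (\<lambda>t::real. ((norm (a + t *\<^sub>R x))\<^sup>2 - (norm a)\<^sup>2) / (2 * t))"
  have h0: "h 0 = A" by (simp add: h_def A_def)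
  have mono: "q s \<le> q t" if "s \<le> t" "t < 0" for s t
  proof (cases "s = t")
    case True then show ?thesis by simp
  next
    case False
    with that have st: "s < t" "s < 0" by auto
    define l where "l = t / s"
    have l0: "0 < l" "l < 1" using st that by (auto simp: l_def field_simps)
    have eq: "a + t *\<^sub>R x = l *\<^sub>R (a + s *\<^sub>R x) + (1 - l) *\<^sub>R a"
      using st by (simp add: l_def algebra_simps)
    have "h t \<le> l * h s + (1 - l) * A"
    proof -
      have "h t \<le> norm (l *\<^sub>R (a + s *\<^sub>R x)) + norm ((1 - l) *\<^sub>R a)"
        unfolding h_def eq by (rule norm_triangle_ineq)
      also have "\<dots> = l * h s + (1 - l) * A" using l0 by (simp add: h_def A_def)
      finally show ?thesis .
    qed
    then have "h t - A \<le> l * (h s - A)" by (simp add: algebra_simps)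
    then have "l * (h s - A) / t \<le> (h t - A) / t"
      using that by (simp add: divide_right_mono_neg)
    moreover have "l * (h s - A) / t = (h s - A) / s" using st that by (simp add: l_def field_simps)
    ultimately show ?thesis by (simp add: q_def)
  qed
  have bnd: "q t \<le> norm x" if "t < 0" for t
  proof -
    have "norm a \<le> norm (a + t *\<^sub>R x) + norm (t *\<^sub>R x)"
      by (metis add_diff_cancel_right' norm_triangle_ineq4)
    then have "h t - A \<ge> t * norm x" using that by (simp add: h_def A_def)
    then show ?thesis using that by (simp add: q_def pos_divide_le_eq neg_divide_le_eq mult.commute)
  qed
  have "(q \<longlongrightarrow> Sup (q ` ({..<0} \<inter> UNIV))) (at 0 within ({..<0} \<inter> UNIV))"
    by (rule Lim_left_bound[where K = "norm x"]) (auto intro: mono bnd)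
  then obtain L where qL: "(q \<longlongrightarrow> L) (at_left 0)" by auto
  have hc: "(h \<longlongrightarrow> A) (at_left 0)"
  proof -
    have "((\<lambda>t::real. norm (a + t *\<^sub>R x)) \<longlongrightarrow> norm (a + 0 *\<^sub>R x)) (at_left 0)"
      by (intro tendsto_intros)
    then show ?thesis by (simp add: h_def A_def)
  qed
  have "((\<lambda>t. q t * ((h t + A) / 2)) \<longlongrightarrow> L * ((A + A) / 2)) (at_left 0)"
    by (intro tendsto_intros qL hc) auto
  moreover have "eventually (\<lambda>t. q t * ((h t + A) / 2) = Q t) (at_left 0)"
  proof -
    have "eventually (\<lambda>t::real. t < 0) (at_left 0)" by (simp add: eventually_at_filter)
    then show ?thesis
    proof eventually_elim
      case (elim t)
      then show ?case
        by (simp add: q_def Q_def h_def A_def power2_eq_square field_simps)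
    qed
  qed
  ultimately have QL: "(Q \<longlongrightarrow> L * A) (at_left 0)"
    by (simp add: tendsto_cong)
  have sipQ: "sip_i x a = L * A"
    unfolding sip_i_def Q_def[symmetric] using QL
    by (intro tendsto_Lim) (simp_all add: trivial_limit_at_left_real)
  have low: "((\<lambda>t. A * (A - B) + t * (A - B)\<^sup>2 / 2) \<longlongrightarrow> A * (A - B) + 0 * (A - B)\<^sup>2 / 2) (at_left 0)"
    by (intro tendsto_intros) auto
  have ev: "eventually (\<lambda>t. A * (A - B) + t * (A - B)\<^sup>2 / 2 \<le> Q t) (at_left 0)"
  proof -
    have "eventually (\<lambda>t::real. -1 < t \<and> t < 0) (at_left 0)"
      by (rule eventually_at_leftI[of "-1"]) auto
    then show ?thesis
    proof eventually_elim
      case (elim t)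
      define c where "c = (1 + t) * A - t * B"
      have A0: "A \<ge> 0" "B \<ge> 0" by (auto simp: A_def B_def)
      have "(1 + t) * A \<ge> 0" "(- t) * B \<ge> 0" using elim A0 by (auto simp: mult_nonpos_nonneg)
      then have c0: "c \<ge> 0" unfolding c_def by linarith
      have "a + t *\<^sub>R x = (1 + t) *\<^sub>R a + t *\<^sub>R (x - a)" by (simp add: algebra_simps)
      then have "h t \<le> norm ((1 + t) *\<^sub>R a) + norm (t *\<^sub>R (x - a))"
        unfolding h_def by (metis norm_triangle_ineq)
      also have "\<dots> = c" using elim by (simp add: c_def A_def B_def)
      finally have hc: "h t \<le> c" .
      have "(h t)\<^sup>2 \<le> c\<^sup>2" using hc by (simp add: h_def power_mono)
      then have "(c\<^sup>2 - A\<^sup>2) / (2 * t) \<le> ((h t)\<^sup>2 - A\<^sup>2) / (2 * t)"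
        using elim by (intro divide_right_mono_neg) auto
      moreover have "(c\<^sup>2 - A\<^sup>2) / (2 * t) = A * (A - B) + t * (A - B)\<^sup>2 / 2"
        using elim by (simp add: c_def power2_eq_square field_simps)
      ultimately show ?case by (simp add: Q_def h_def A_def)
    qed
  qed
  have "A * (A - B) \<le> L * A"
    using tendsto_le[OF trivial_limit_at_left_real QL low ev] by simp
  then show ?thesis by (simp add: sipQ A_def B_def)
qed

lemma part2:
  fixes b :: "'a::real_normed_vector" and e :: real
  assumes "b \<noteq> 0" "0 < e" "e < 1"
  shows "sip_i (e *\<^sub>R b) b = e * (norm b)\<^sup>2"
proof -
  define Q where "Q = (\<lambda>t::real. ((norm (b + t *\<^sub>R (e *\<^sub>R b)))\<^sup>2 - (norm b)\<^sup>2) / (2 * t))"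
  have lim: "((\<lambda>t. (2 * e + t * e\<^sup>2) * (norm b)\<^sup>2 / 2) \<longlongrightarrow> (2 * e + 0 * e\<^sup>2) * (norm b)\<^sup>2 / 2) (at_left 0)"
    by (intro tendsto_intros) auto
  have ev: "eventually (\<lambda>t. (2 * e + t * e\<^sup>2) * (norm b)\<^sup>2 / 2 = Q t) (at_left 0)"
  proof -
    have "eventually (\<lambda>t::real. -1 < t \<and> t < 0) (at_left 0)"
      by (rule eventually_at_leftI[of "-1"]) auto
    then show ?thesis
    proof eventually_elim
      case (elim t)
      have "-1 < t * e" using elim assms
        by (smt (verit) mult_less_cancel_left2 mult_minus_left)
      then have pos: "0 < 1 + t * e" by simp
      have "b + t *\<^sub>R (e *\<^sub>R b) = (1 + t * e) *\<^sub>R b" by (simp add: algebra_simps)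
      then have "norm (b + t *\<^sub>R (e *\<^sub>R b)) = (1 + t * e) * norm b" using pos by simp
      then show ?case using elim by (simp add: Q_def power2_eq_square field_simps)
    qed
  qed
  have "(Q \<longlongrightarrow> e * (norm b)\<^sup>2) (at_left 0)"
    using tendsto_cong[OF ev] lim by simp
  then show ?thesis unfolding sip_i_def Q_def[symmetric]
    by (intro tendsto_Lim) (simp_all add: trivial_limit_at_left_real)
qed

theorem lemma2p2:
  fixes x a :: "'a::real_normed_vector"
  shows "sip_i x a \<ge> norm a * (norm a - norm (x - a))
     \<and> (\<forall>b::'a. \<forall>\<epsilon>::real. b \<noteq> 0 \<and> 0 < \<epsilon> \<and> \<epsilon> < 1 \<longrightarrow>
           sip_i (\<epsilon> *\<^sub>R b) b = \<epsilon> * (norm b)\<^sup>2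
         \<and> norm b * (norm b - norm (\<epsilon> *\<^sub>R b - b)) = \<epsilon> * (norm b)\<^sup>2
         \<and> \<epsilon> * (norm b)\<^sup>2 \<noteq> 0)"
proof (intro conjI allI impI)
  show "sip_i x a \<ge> norm a * (norm a - norm (x - a))" by (rule part1)
next
  fix b :: 'a and e :: real
  assume h: "b \<noteq> 0 \<and> 0 < e \<and> e < 1"
  then show "sip_i (e *\<^sub>R b) b = e * (norm b)\<^sup>2" by (intro part2) auto
  have "e *\<^sub>R b - b = (- (1 - e)) *\<^sub>R b" by (simp add: algebra_simps)
  then have "norm (e *\<^sub>R b - b) = (1 - e) * norm b" using h by (simp only: norm_scaleR) simp
  then show "norm b * (norm b - norm (e *\<^sub>R b - b)) = e * (norm b)\<^sup>2"
    by (simp only:) (simp add: power2_eq_square algebra_simps)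
  show "e * (norm b)\<^sup>2 \<noteq> 0" using h by simp
qed

end
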